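(* None of the following pairs of consecutive patterns is reciprocal: $(\underline{2010},\underline{2120})$, $(\underline{1000},\underline{1110})$, $(\underline{2100},\underline{2210})$. Here two consecutive patterns $p,q$ are reciprocal if for every $n\ge1$ and all $S,T\subseteq[n]$, $$|\{\epsilon\in I_n:\operatorname{Em}(p,\epsilon)=S,\ \operatorname{Em}(q,\epsilon)=T\}|=|\{\epsilon\in I_n:\operatorname{Em}(p,\epsilon)=T,\ \operatorname{Em}(q,\epsilon)=S\}|.$$
   Context: An inversion sequence of length $n$ is an integer sequence $\epsilon=\epsilon_1\cdots\epsilon_n$ with $0\le\epsilon_i<i$ for all $i$; $I_n$ denotes the set of them. The reduction of an integer word is obtained by replacing every occurrence of its $k$-th smallest distinct value by $k-1$. A consecutive pattern $p=\underline{p_1\cdots p_r}$ occurs in a sequence $\epsilon$ at position $i$ if the reduction of $\epsilon_i\cdots\epsilon_{i+r-1}$ equals $p_1\cdots p_r$. $\operatorname{Em}(p,\epsilon)$ is the set of positions at which $p$ occurs in $\epsilon$. *)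

theory Defs
  imports Main
begin

text \<open>Inversion sequences of length n, as lists: entry i (1-based) satisfies 0 \<le> e_i < i,
  i.e. the list entry at 0-based index j satisfies e ! j < j + 1.\<close>
definition inv_seqs :: "nat \<Rightarrow> nat list set" where
  "inv_seqs n = {e. length e = n \<and> (\<forall>j < n. e ! j < Suc j)}"

definition reduction :: "nat list \<Rightarrow> nat list" where
  "reduction w = map (\<lambda>x. card {y \<in> set w. y < x}) w"

definition Em :: "nat list \<Rightarrow> nat list \<Rightarrow> nat set" where
  "Em p e = {i \<in> {1..length e}. i + length p - 1 \<le> length e \<and>
                 reduction (take (length p) (drop (i - 1) e)) = p}"

definition reciprocal :: "nat list \<Rightarrow> nat list \<Rightarrow> bool" where
  "reciprocal p q \<longleftrightarrow> (\<forall>n \<ge> 1. \<forall>S T. S \<subseteq> {1..n} \<longrightarrow> T \<subseteq> {1..n} \<longrightarrow>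
      card {e \<in> inv_seqs n. Em p e = S \<and> Em q e = T} =
      card {e \<in> inv_seqs n. Em p e = T \<and> Em q e = S})"

end

theory Submission
  imports Defs
begin

lemma red_mono:
  fixes x x' :: nat and w :: "nat list"
  assumes "x \<in> set w" "x' \<in> set w" "x < x'"
  shows "card {y \<in> set w. y < x} < card {y \<in> set w. y < x'}"
proof (rule psubset_card_mono)
  show "finite {y \<in> set w. y < x'}" by simp
  have "{y \<in> set w. y < x} \<subseteq> {y \<in> set w. y < x'}" using assms(3) by auto
  moreover have "x \<in> {y \<in> set w. y < x'}" "x \<notin> {y \<in> set w. y < x}" using assms by auto
  ultimately show "{y \<in> set w. y < x} \<subset> {y \<in> set w. y < x'}" by blast
qed

lemma red_rel:
  assumes "reduction w = p" "a < length w" "b < length w"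
  shows "(p!a < p!b \<longrightarrow> w!a < w!b) \<and> (p!a = p!b \<longrightarrow> w!a = w!b)"
proof -
  have pa: "p!a = card {y \<in> set w. y < w!a}" "p!b = card {y \<in> set w. y < w!b}"
    using assms unfolding reduction_def by auto
  have ia: "w!a \<in> set w" "w!b \<in> set w" using assms by auto
  show ?thesis
  proof (intro conjI impI)
    assume "p!a < p!b"
    show "w!a < w!b"
    proof (rule ccontr)
      assume "\<not> w!a < w!b"
      then have "w!b < w!a \<or> w!b = w!a" by auto
      then show False
      proof
        assume "w!b < w!a" then show False using red_mono[OF ia(2) ia(1)] pa \<open>p!a < p!b\<close> by simp
      next
        assume "w!b = w!a" then show False using pa \<open>p!a < p!b\<close> by simp
      qed
    qed
  next
    assume "p!a = p!b"
    show "w!a = w!b"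
    proof (rule ccontr)
      assume "w!a \<noteq> w!b"
      then have "w!b < w!a \<or> w!a < w!b" by auto
      then show False
      proof
        assume "w!b < w!a" then show False using red_mono[OF ia(2) ia(1)] pa \<open>p!a = p!b\<close> by simp
      next
        assume "w!a < w!b" then show False using red_mono[OF ia(1) ia(2)] pa \<open>p!a = p!b\<close> by simp
      qed
    qed
  qed
qed

lemma em_rel:
  assumes "i \<in> Em p e" "a < length p" "b < length p"
  shows "(p!a < p!b \<longrightarrow> e!(i-1+a) < e!(i-1+b)) \<and> (p!a = p!b \<longrightarrow> e!(i-1+a) = e!(i-1+b))"
proof -
  let ?w = "take (length p) (drop (i - 1) e)"
  have i: "1 \<le> i" "i + length p - 1 \<le> length e" "reduction ?w = p"
    using assms(1) unfolding Em_def by auto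
  have lw: "length ?w = length p" using i by auto
  have "?w ! a = e!(i-1+a)" "?w ! b = e!(i-1+b)" using assms i by auto
  then show ?thesis using red_rel[OF i(3)] assms lw by metis
qed

lemma Em_code: "Em p e = set (filter (\<lambda>i. i + length p - 1 \<le> length e \<and>
   reduction (take (length p) (drop (i - 1) e)) = p) [1..<Suc (length e)])"
  unfolding Em_def by auto

lemma red_code: "reduction w = map (\<lambda>x. length (remdups (filter (\<lambda>y. y < x) w))) w"
  unfolding reduction_def length_remdups_card_conv set_filter by (rule refl)

lemma fin_inv: "finite (inv_seqs n)"
proof -
  have "inv_seqs n \<subseteq> {xs. set xs \<subseteq> {..<n} \<and> length xs = n}"
    unfolding inv_seqs_def by (auto simp: in_set_conv_nth) (metis less_Suc_eq_le order_le_less_trans nat_less_le)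
  moreover have "finite {xs. set xs \<subseteq> {..<n} \<and> length xs = n}"
    by (rule finite_lists_length_eq) simp
  ultimately show ?thesis by (rule finite_subset)
qed

lemma card_pos: "w \<in> inv_seqs n \<Longrightarrow> P w \<Longrightarrow> card {e \<in> inv_seqs n. P e} \<noteq> 0"
  using fin_inv[of n] by auto

lemma ex1: "Em [2,0,1,0] [0,0,2,1,2,0,1,0] = {5}" "Em [2,1,2,0] [0,0,2,1,2,0,1,0] = {3}"
  unfolding Em_code red_code by (simp_all add: upt_conv_Cons)

lemma ex2: "Em [1,0,0,0] [0,0,2,1,1,1,0] = {3}" "Em [1,1,1,0] [0,0,2,1,1,1,0] = {4}"
  unfolding Em_code red_code by (simp_all add: upt_conv_Cons)

lemma ex3: "Em [2,1,0,0] [0,0,2,2,1,0,0] = {4}" "Em [2,2,1,0] [0,0,2,2,1,0,0] = {3}"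
  unfolding Em_code red_code by (simp_all add: upt_conv_Cons)

lemma w1: "[0,0,2,1,2,0,1,0] \<in> inv_seqs 8"
  unfolding inv_seqs_def by (auto simp: eval_nat_numeral less_Suc_eq)
lemma w2: "[0,0,2,1,1,1,0] \<in> inv_seqs 7"
  unfolding inv_seqs_def by (auto simp: eval_nat_numeral less_Suc_eq)
lemma w3: "[0,0,2,2,1,0,0] \<in> inv_seqs 7"
  unfolding inv_seqs_def by (auto simp: eval_nat_numeral less_Suc_eq)

lemma empty1:
  assumes "e \<in> inv_seqs 8" "3 \<in> Em [2,0,1,0] e" "5 \<in> Em [2,1,2,0] e"
  shows False
proof -
  have a: "e!2 < 3" using assms(1) unfolding inv_seqs_def
    by (metis (no_types, lifting) mem_Collect_eq numeral_2_eq_2 numeral_3_eq_3 numeral_less_iff semiring_norm(76,78))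
  have b: "e!4 < e!2" using em_rel[OF assms(2), of 2 0] by simp
  have c: "e!5 < e!4" using em_rel[OF assms(2), of 3 2] by simp
  have d: "e!7 < e!5" using em_rel[OF assms(3), of 3 1] by simp
  show False using a b c d by linarith
qed

lemma empty2:
  assumes "4 \<in> Em [1,0,0,0] e" "3 \<in> Em [1,1,1,0] e"
  shows False
proof -
  have b: "e!4 < e!3" using em_rel[OF assms(1), of 1 0] by simp
  have c: "e!3 = e!4" using em_rel[OF assms(2), of 1 2] by simp
  show False using b c by simp
qed

lemma empty3:
  assumes "3 \<in> Em [2,1,0,0] e" "4 \<in> Em [2,2,1,0] e"
  shows False
proof -
  have b: "e!4 < e!3" using em_rel[OF assms(1), of 2 1] by simp
  have c: "e!3 = e!4" using em_rel[OF assms(2), of 0 1] by simp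
  show False using b c by simp
qed

lemma nr:
  assumes "w \<in> inv_seqs n" "n \<ge> 1" "S \<subseteq> {1..n}" "T \<subseteq> {1..n}"
    "Em p w = S" "Em q w = T"
    "\<And>e. e \<in> inv_seqs n \<Longrightarrow> Em p e = T \<Longrightarrow> Em q e = S \<Longrightarrow> False"
  shows "\<not> reciprocal p q"
proof
  assume "reciprocal p q"
  then have "card {e \<in> inv_seqs n. Em p e = S \<and> Em q e = T} =
      card {e \<in> inv_seqs n. Em p e = T \<and> Em q e = S}"
    using assms(2-4) unfolding reciprocal_def by blast
  moreover have "{e \<in> inv_seqs n. Em p e = T \<and> Em q e = S} = {}" using assms(7) by blast
  moreover have "card {e \<in> inv_seqs n. Em p e = S \<and> Em q e = T} \<noteq> 0"
    using card_pos[of w n "\<lambda>e. Em p e = S \<and> Em q e = T"] assms(1,5,6) by blast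
  ultimately show False by simp
qed

theorem mainTheorem3:
  shows "\<not> reciprocal [2,0,1,0] [2,1,2,0] \<and> \<not> reciprocal [1,0,0,0] [1,1,1,0]
       \<and> \<not> reciprocal [2,1,0,0] [2,2,1,0]"
proof (intro conjI)
  show "\<not> reciprocal [2,0,1,0] [2,1,2,0]"
  proof -
    have h: "\<And>e. e \<in> inv_seqs 8 \<Longrightarrow> Em [2,0,1,0] e = {3} \<Longrightarrow> Em [2,1,2,0] e = {5} \<Longrightarrow> False"
      using empty1 by blast
    show ?thesis by (rule nr[OF w1 _ _ _ ex1 h]) auto
  qed
  show "\<not> reciprocal [1,0,0,0] [1,1,1,0]"
  proof -
    have h: "\<And>e. e \<in> inv_seqs 7 \<Longrightarrow> Em [1,0,0,0] e = {4} \<Longrightarrow> Em [1,1,1,0] e = {3} \<Longrightarrow> False"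
      using empty2 by blast
    show ?thesis by (rule nr[OF w2 _ _ _ ex2 h]) auto
  qed
  show "\<not> reciprocal [2,1,0,0] [2,2,1,0]"
  proof -
    have h: "\<And>e. e \<in> inv_seqs 7 \<Longrightarrow> Em [2,1,0,0] e = {3} \<Longrightarrow> Em [2,2,1,0] e = {4} \<Longrightarrow> False"
      using empty3 by blast
    show ?thesis by (rule nr[OF w3 _ _ _ ex3 h]) auto
  qed
qed

end
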